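(* Let $\mathcal E_{\mathcal F}$ be an $A_\infty$-category and $\mathcal F\subset\mathcal E_{\mathcal F}$ a full $A_\infty$-subcategory such that $b_n$ vanishes on $D_n(\mathcal E_{\mathcal F}|\mathcal F)$ for all $n\ge2$. Then the canonical strict embedding $\mathsf j:\mathcal E_{\mathcal F}\to\mathsf D(\mathcal E_{\mathcal F}|\mathcal F)$ admits a splitting strict $A_\infty$-functor $\pi:\mathsf D(\mathcal E_{\mathcal F}|\mathcal F)\to\mathcal E_{\mathcal F}$, i.e. $\mathsf j\pi=\mathrm{id}_{\mathcal E_{\mathcal F}}$, whose first component $\pi_1$ is the composite $s\mathsf D(\mathcal E_{\mathcal F}|\mathcal F)\hookrightarrow T^+s\mathcal E_{\mathcal F}\xrightarrow{\mathrm{pr}_1}s\mathcal E_{\mathcal F}$.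
   Context: Conventions: $\Bbbk$ commutative ring, $\otimes=\otimes_\Bbbk$ with Koszul signs, maps written on the right. An $A_\infty$-category has degree 1 maps $b_n:T^ns\mathcal A\to s\mathcal A$ ($s$ suspension, $T^ns\mathcal A(X,Y)=\bigoplus s\mathcal A(X,X_1)\otimes\cdots\otimes s\mathcal A(X_{n-1},Y)$) with $\sum(1^{\otimes r}\otimes b_n\otimes1^{\otimes t})b_{r+1+t}=0$. An $A_\infty$-functor $f$ has an object map and degree 0 components $f_n$ with $\sum(f_{i_1}\otimes\cdots\otimes f_{i_l})b_l=\sum(1^{\otimes r}\otimes b_n\otimes1^{\otimes t})f_{r+1+t}$; it is strict if $f_n=0$ for $n\ge2$. For a full subcategory $\mathcal F\subset\mathcal E$ and $n\ge2$, $D_n(\mathcal E|\mathcal F)\subset(s\mathcal E)^{\otimes n}$ is the sum of all $s\mathcal E(X_0,X_1)\otimes\cdots\otimes s\mathcal E(X_{n-1},X_n)$ with at least one $X_i\in\mathrm{Ob}\,\mathcal F$. $T^+s\mathcal E=\bigoplus_{n\ge1}T^ns\mathcal E$, $\mathrm{pr}_1$ the projection onto $T^1s\mathcal E=s\mathcal E$, and $\mu^{(n)}$ the $n$-fold concatenation of tensor words. $\mathsf D(\mathcal E|\mathcal F)$ is the $A_\infty$-category with objects $\mathrm{Ob}\,\mathcal E$, $s\mathsf D(\mathcal E|\mathcal F)(X,Y)=\bigoplus_{n\ge1}\bigoplus_{C_1,\dots,C_{n-1}\in\mathrm{Ob}\,\mathcal F}s\mathcal E(X,C_1)\otimes\cdots\otimes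 s\mathcal E(C_{n-1},Y)\subset T^+s\mathcal E(X,Y)$, with $\bar b_1=\sum1^{\otimes q}\otimes b_m\otimes1^{\otimes t}$ on $T^ks\mathcal E$ and, for $n\ge2$, $\bar b_n=\mu^{(n)}\sum_{m;\,q<k;\,t<l}1^{\otimes q}\otimes b_m\otimes1^{\otimes t}$ on $T^ks\mathcal E\otimes(T^+s\mathcal E)^{\otimes n-2}\otimes T^ls\mathcal E$. The canonical strict embedding $\mathsf j:\mathcal E\to\mathsf D(\mathcal E|\mathcal F)$ is the identity on objects with $\mathsf j_1$ the inclusion of the summand $s\mathcal E(X,Y)$ and $\mathsf j_n=0$ for $n>1$. *)

theory Defs
  imports Complex_Main
begin

(* All hom-modules s E(X,Y) are graded
   k-submodules of one ambient k-module 'm (scalar multiplication "sc");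
   hom X Y d is the degree-d component of s E(X,Y).
   A composable tensor word  a_1 (x) ... (x) a_n  with a_i in sE(X_{i-1},X_i)^{d_i}
   is recorded as (os, ds, as) with os = [X_0,...,X_n], ds = [d_1..d_n], as = [a_1..a_n].
   Linear maps out of tensor products are given by their (multilinear) values on
   pure tensors of homogeneous elements.  b os as is the value of b_n (n = length as)
   on a_1 (x) ... (x) a_n in sE(X_0,X_1) (x) ... (x) sE(X_{n-1},X_n). *)

definition ksign :: "int \<Rightarrow> 'k::comm_ring_1" where
  "ksign s = (if even s then 1 else -1)"

definition homw :: "'o set \<Rightarrow> ('o \<Rightarrow> 'o \<Rightarrow> int \<Rightarrow> 'm set)
                    \<Rightarrow> 'o list \<Rightarrow> int list \<Rightarrow> 'm list \<Rightarrow> bool" where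
  "homw Obj hom os ds as \<longleftrightarrow>
     length os = length as + 1 \<and> length ds = length as \<and> set os \<subseteq> Obj \<and>
     (\<forall>i<length as. as ! i \<in> hom (os ! i) (os ! (i+1)) (ds ! i))"

definition graded_homs ::
  "('k::comm_ring_1 \<Rightarrow> 'm::ab_group_add \<Rightarrow> 'm) \<Rightarrow> 'o set \<Rightarrow> ('o \<Rightarrow> 'o \<Rightarrow> int \<Rightarrow> 'm set) \<Rightarrow> bool" where
  "graded_homs sc Obj hom \<longleftrightarrow> module sc \<and>
     (\<forall>X Y d. 0 \<in> hom X Y d \<and> (\<forall>x\<in>hom X Y d. \<forall>y\<in>hom X Y d. x + y \<in> hom X Y d)
        \<and> (\<forall>c. \<forall>x\<in>hom X Y d. sc c x \<in> hom X Y d)) \<and>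
     (\<forall>X Y d e. d \<noteq> e \<longrightarrow> hom X Y d \<inter> hom X Y e = {0})"

definition ainf_cat ::
  "('k::comm_ring_1 \<Rightarrow> 'm::ab_group_add \<Rightarrow> 'm) \<Rightarrow> 'o set \<Rightarrow> ('o \<Rightarrow> 'o \<Rightarrow> int \<Rightarrow> 'm set)
   \<Rightarrow> ('o list \<Rightarrow> 'm list \<Rightarrow> 'm) \<Rightarrow> bool" where
  "ainf_cat sc Obj hom b \<longleftrightarrow> graded_homs sc Obj hom \<and>
     \<comment> \<open>b_n has degree 1\<close>
     (\<forall>os ds as. 1 \<le> length as \<and> homw Obj hom os ds as \<longrightarrow>
        b os as \<in> hom (hd os) (last os) (sum_list ds + 1)) \<and>
     \<comment> \<open>b_n is k-multilinear\<close>
     (\<forall>os ds as i y c. 1 \<le> length as \<and> homw Obj hom os ds as \<and> i < length as \<and>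
        y \<in> hom (os ! i) (os ! (i+1)) (ds ! i) \<longrightarrow>
        b os (as[i := as ! i + y]) = b os as + b os (as[i := y]) \<and>
        b os (as[i := sc c (as ! i)]) = sc c (b os as)) \<and>
     \<comment> \<open>A_infinity equations, Koszul sign (x(x)y)(f(x)g) = (-1)^(|y||f|) xf(x)yg\<close>
     (\<forall>os ds as. 1 \<le> length as \<and> homw Obj hom os ds as \<longrightarrow>
        (\<Sum>r\<in>{0..length as}. \<Sum>n\<in>{1..length as - r}.
           sc (ksign (sum_list (drop (r+n) ds)))
              (b (take (r+1) os @ drop (r+n) os)
                 (take r as @ [b (take (n+1) (drop r os)) (take n (drop r as))] @ drop (r+n) as)))
        = 0)"

definition vanishes_on_D ::
  "'o set \<Rightarrow> ('o \<Rightarrow> 'o \<Rightarrow> int \<Rightarrow> 'm::zero set) \<Rightarrow> 'o set \<Rightarrow> ('o list \<Rightarrow> 'm list \<Rightarrow> 'm) \<Rightarrow> bool" where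
  "vanishes_on_D Obj hom FOb b \<longleftrightarrow>
     (\<forall>os ds as. 2 \<le> length as \<and> homw Obj hom os ds as \<and> (\<exists>X\<in>set os. X \<in> FOb) \<longrightarrow>
        b os as = 0)"

(* generator words of s D(E|F)(X,Y): s E(X,C_1) (x) ... (x) s E(C_{n-1},Y), C_i in Ob F *)
definition dword :: "'o set \<Rightarrow> ('o \<Rightarrow> 'o \<Rightarrow> int \<Rightarrow> 'm set) \<Rightarrow> 'o set
                     \<Rightarrow> 'o list \<times> int list \<times> 'm list \<Rightarrow> bool" where
  "dword Obj hom FOb w \<longleftrightarrow> (case w of (os, ds, as) \<Rightarrow>
     1 \<le> length as \<and> homw Obj hom os ds as \<and> (\<forall>i. 0 < i \<and> i < length as \<longrightarrow> os ! i \<in> FOb))"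

definition wchain :: "('o list \<times> int list \<times> 'm list) list \<Rightarrow> bool" where
  "wchain ws \<longleftrightarrow> (\<forall>i. i + 1 < length ws \<longrightarrow> last (fst (ws ! i)) = hd (fst (ws ! (i+1))))"

definition wconcat :: "('o list \<times> int list \<times> 'm list) list \<Rightarrow> 'o list \<times> int list \<times> 'm list" where
  "wconcat ws = (concat (map (butlast \<circ> fst) ws) @ [last (fst (last ws))],
                 concat (map (fst \<circ> snd) ws), concat (map (snd \<circ> snd) ws))"

(* elements of T^+ sE represented as formal sums of pure tensor words c * (a_1 (x) ... (x) a_k) *)
type_synonym ('k, 'm) tsum = "('k \<times> 'm list) list"

(* bbar_n on w_1 (x) ... (x) w_n (w_1 in T^k, w_n in T^l):
   mu^(n) followed by sum of 1^q (x) b_m (x) 1^t with q < k, t < l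
   (for n = 1 these restrictions are automatic, giving bbar_1) *)
definition bbar :: "('o list \<Rightarrow> 'm list \<Rightarrow> 'm) \<Rightarrow> ('o list \<times> int list \<times> 'm list) list
                    \<Rightarrow> ('k::comm_ring_1, 'm) tsum" where
  "bbar b ws = (case wconcat ws of (os, ds, as) \<Rightarrow>
     let N = length as; k = length (snd (snd (hd ws))); l = length (snd (snd (last ws))) in
     concat (map (\<lambda>q. map (\<lambda>m. let t = N - q - m in
         (ksign (sum_list (drop (q+m) ds)),
          take q as @ [b (take (m+1) (drop q os)) (take m (drop q as))] @ drop (q+m) as))
       (filter (\<lambda>m. N - q - m < l) [1..<N - q + 1]))
       (filter (\<lambda>q. q < k) [0..<N])))"

definition pr1 :: "('k::comm_ring_1 \<Rightarrow> 'm::ab_group_add \<Rightarrow> 'm) \<Rightarrow> ('k, 'm) tsum \<Rightarrow> 'm" where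
  "pr1 sc x = sum_list (map (\<lambda>(c, w). if length w = 1 then sc c (hd w) else 0) x)"

definition pi1 :: "('k::comm_ring_1 \<Rightarrow> 'm::ab_group_add \<Rightarrow> 'm) \<Rightarrow> 'm list \<Rightarrow> 'm" where
  "pi1 sc as = pr1 sc [(1, as)]"

definition j1 :: "'m \<Rightarrow> 'm list" where
  "j1 a = [a]"

end

theory Submission
  imports Defs
begin
lemma sl_concat: "sum_list (map g (concat xss)) = sum_list (map (\<lambda>xs. sum_list (map g xs)) xss)"
  by (induction xss) auto

lemma pr1_bbar:
  assumes wc: "wconcat ws = (os, ds, as)" and ld: "length ds = length as"
    and lo: "length os = length as + 1" and n1: "1 \<le> length as"
    and k: "1 \<le> length (snd (snd (hd ws)))" and l: "1 \<le> length (snd (snd (last ws)))"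
    and m: "module sc"
  shows "pr1 sc (bbar b ws :: ('k::comm_ring_1, 'm::ab_group_add) tsum) = b os as"
proof -
  define N where "N = length as"
  define K where "K = length (snd (snd (hd ws)))"
  define L where "L = length (snd (snd (last ws)))"
  define F where "F = (\<lambda>q m. (ksign (sum_list (drop (q+m) ds)) :: 'k,
          take q as @ [b (take (m+1) (drop q os)) (take m (drop q as))] @ drop (q+m) as))"
  define g where "g = (\<lambda>(c::'k, w). if length w = 1 then sc c (hd w) else 0)"
  have "bbar b ws = concat (map (\<lambda>q. map (F q) (filter (\<lambda>m. N - q - m < L) [1..<N - q + 1]))
       (filter (\<lambda>q. q < K) [0..<N]))"
    unfolding bbar_def wc F_def N_def K_def L_def by (simp only: Let_def prod.case)
  then have "pr1 sc (bbar b ws) = (\<Sum>q\<leftarrow>filter (\<lambda>q. q < K) [0..<N]. \<Sum>m\<leftarrow>filter (\<lambda>m. N - q - m < L) [1..<N - q + 1]. g (F q m))"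
    unfolding pr1_def g_def by (simp add: sl_concat o_def)
  also have "\<dots> = (\<Sum>q\<in>set (filter (\<lambda>q. q < K) [0..<N]). \<Sum>m\<in>set (filter (\<lambda>m. N - q - m < L) [1..<N - q + 1]). g (F q m))"
    by (simp add: sum_list_distinct_conv_sum_set)
  also have "\<dots> = (\<Sum>q\<in>set (filter (\<lambda>q. q < K) [0..<N]). \<Sum>m\<in>set (filter (\<lambda>m. N - q - m < L) [1..<N - q + 1]). if q = 0 \<and> m = N then b os as else 0)"
  proof (intro sum.cong refl)
    fix q m assume q: "q \<in> set (filter (\<lambda>q. q < K) [0..<N])" and mm: "m \<in> set (filter (\<lambda>m. N - q - m < L) [1..<N - q + 1])"
    have qN: "q < N" "1 \<le> m" "m \<le> N - q" using q mm by auto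
    have len: "length (snd (F q m)) = q + 1 + (N - (q + m))" using qN unfolding F_def N_def by simp
    show "g (F q m) = (if q = 0 \<and> m = N then b os as else 0)"
    proof (cases "q = 0 \<and> m = N")
      case True
      then show ?thesis using lo ld m unfolding g_def F_def N_def by (simp add: module.scale_one ksign_def)
    next
      case False
      then have "length (snd (F q m)) \<noteq> 1" using len qN by auto
      then show ?thesis using False unfolding g_def by (auto split: prod.splits)
    qed
  qed
  also have "\<dots> = (\<Sum>q\<in>set (filter (\<lambda>q. q < K) [0..<N]). if q = 0 then b os as else 0)"
  proof (intro sum.cong refl)
    fix q assume q: "q \<in> set (filter (\<lambda>q. q < K) [0..<N])"
    show "(\<Sum>m\<in>set (filter (\<lambda>m. N - q - m < L) [1..<N - q + 1]). if q = 0 \<and> m = N then b os as else 0) = (if q = 0 then b os as else 0)"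
    proof (cases "q = 0")
      case True
      have "N \<in> set (filter (\<lambda>m. N - q - m < L) [1..<N - q + 1])" using True n1 l unfolding N_def L_def by auto
      then show ?thesis using True by (simp add: sum.delta')
    qed simp
  qed
  also have "\<dots> = b os as"
  proof -
    have "0 \<in> set (filter (\<lambda>q. q < K) [0..<N])" using n1 k unfolding N_def K_def by auto
    then show ?thesis by (simp add: sum.delta)
  qed
  finally show ?thesis .
qed

lemma ainf_module: "ainf_cat sc Obj hom b \<Longrightarrow> module sc"
  unfolding ainf_cat_def graded_homs_def by blast

lemma ainf_zero: "ainf_cat sc Obj hom b \<Longrightarrow> 0 \<in> hom X Y d"
  unfolding ainf_cat_def graded_homs_def by blast

lemma b_zero:
  assumes A: "ainf_cat sc Obj hom b" and h: "homw Obj hom os ds as"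
    and i: "i < length as" and z: "as ! i = 0"
  shows "b os as = 0"
proof -
  have m: "module sc" using A by (rule ainf_module)
  have y: "as ! i \<in> hom (os ! i) (os ! (i+1)) (ds ! i)" using h i unfolding homw_def by blast
  have "b os (as[i := sc 0 (as ! i)]) = sc 0 (b os as)"
  proof -
    have "1 \<le> length as" using i by simp
    then show ?thesis using A h i y unfolding ainf_cat_def by blast
  qed
  moreover have "as[i := sc 0 (as ! i)] = as" using z m list_update_id[of as i] by (simp add: module.scale_zero_left)
  ultimately show ?thesis using m by (simp add: module.scale_zero_left)
qed

lemma homw_append:
  assumes h1: "homw Obj hom os1 ds1 as1" and h2: "homw Obj hom os2 ds2 as2"
    and j: "last os1 = hd os2"
  shows "homw Obj hom (butlast os1 @ os2) (ds1 @ ds2) (as1 @ as2)"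
proof -
  have l1: "length os1 = length as1 + 1" "length ds1 = length as1" "set os1 \<subseteq> Obj"
    and e1: "\<And>i. i < length as1 \<Longrightarrow> as1 ! i \<in> hom (os1 ! i) (os1 ! (i+1)) (ds1 ! i)"
    using h1 unfolding homw_def by auto
  have l2: "length os2 = length as2 + 1" "length ds2 = length as2" "set os2 \<subseteq> Obj"
    and e2: "\<And>i. i < length as2 \<Longrightarrow> as2 ! i \<in> hom (os2 ! i) (os2 ! (i+1)) (ds2 ! i)"
    using h2 unfolding homw_def by auto
  have lb: "length (butlast os1) = length as1" using l1 by simp
  have sb: "set (butlast os1) \<subseteq> Obj" using l1(3) by (meson in_set_butlastD subset_iff)
  have jj: "os1 ! length as1 = os2 ! 0"
  proof -
    have "os1 \<noteq> []" "os2 \<noteq> []" using l1(1) l2(1) by auto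
    then show ?thesis using j l1(1) by (simp add: last_conv_nth hd_conv_nth)
  qed
  show ?thesis unfolding homw_def
  proof (intro conjI allI impI)
    fix i assume i: "i < length (as1 @ as2)"
    show "(as1 @ as2) ! i \<in> hom ((butlast os1 @ os2) ! i) ((butlast os1 @ os2) ! (i + 1)) ((ds1 @ ds2) ! i)"
    proof (cases "i < length as1")
      case True
      have a: "(butlast os1 @ os2) ! i = os1 ! i" using True lb by (simp add: nth_append nth_butlast)
      have c: "(butlast os1 @ os2) ! (i+1) = os1 ! (i+1)"
      proof (cases "i + 1 < length as1")
        case True then show ?thesis using lb by (simp add: nth_append nth_butlast)
      next
        case False then have "i + 1 = length as1" using \<open>i < length as1\<close> by simp
        then show ?thesis using lb jj by (simp add: nth_append)
      qed
      show ?thesis using True a c e1[OF True] l1(2) by (simp add: nth_append)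
    next
      case False
      define k where "k = i - length as1"
      have k: "i = length as1 + k" "k < length as2" using i False unfolding k_def by auto
      show ?thesis using e2[OF k(2)] k lb l1(2) by (simp add: nth_append)
    qed
  qed (use l1 l2 lb sb in auto)
qed

lemma wchain_ConsD: "wchain (w # ws) \<Longrightarrow> wchain ws"
  unfolding wchain_def
proof (intro allI impI)
  fix i assume a: "\<forall>i. i + 1 < length (w # ws) \<longrightarrow> last (fst ((w # ws) ! i)) = hd (fst ((w # ws) ! (i + 1)))"
    and i: "i + 1 < length ws"
  from a[rule_format, of "Suc i"] i show "last (fst (ws ! i)) = hd (fst (ws ! (i + 1)))" by simp
qed

lemma wchain_Cons_hd: "wchain (w # ws) \<Longrightarrow> ws \<noteq> [] \<Longrightarrow> last (fst w) = hd (fst (hd ws))"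
  unfolding wchain_def
proof -
  assume a: "\<forall>i. i + 1 < length (w # ws) \<longrightarrow> last (fst ((w # ws) ! i)) = hd (fst ((w # ws) ! (i + 1)))"
    and n: "ws \<noteq> []"
  from a[rule_format, of 0] n show ?thesis by (simp add: hd_conv_nth)
qed

lemma wconcat_Cons: "ws \<noteq> [] \<Longrightarrow> wconcat (w # ws) = (butlast (fst w) @ fst (wconcat ws), fst (snd w) @ fst (snd (wconcat ws)), snd (snd w) @ snd (snd (wconcat ws)))"
  unfolding wconcat_def by simp

lemma wconcat_homw:
  assumes "ws \<noteq> []" "\<forall>w\<in>set ws. dword Obj hom FOb w" "wchain ws"
  shows "homw Obj hom (fst (wconcat ws)) (fst (snd (wconcat ws))) (snd (snd (wconcat ws)))
     \<and> hd (fst (wconcat ws)) = hd (fst (hd ws)) \<and> last (fst (wconcat ws)) = last (fst (last ws))"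
  using assms
proof (induction ws)
  case Nil then show ?case by simp
next
  case (Cons w ws)
  obtain os ds as where w: "w = (os, ds, as)" by (cases w)
  have dw: "1 \<le> length as" "homw Obj hom os ds as" using Cons.prems(2) w unfolding dword_def by auto
  have los: "length os \<ge> 2" using dw unfolding homw_def by auto
  show ?case
  proof (cases "ws = []")
    case True
    have "os \<noteq> []" using los by auto
    then have "wconcat [w] = w" using w unfolding wconcat_def by simp
    then show ?thesis using True w dw by simp
  next
    case False
    have IH: "homw Obj hom (fst (wconcat ws)) (fst (snd (wconcat ws))) (snd (snd (wconcat ws)))"
       "hd (fst (wconcat ws)) = hd (fst (hd ws))" "last (fst (wconcat ws)) = last (fst (last ws))"
      using Cons.IH[OF False _ wchain_ConsD[OF Cons.prems(3)]] Cons.prems(2) by auto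
    have j: "last os = hd (fst (wconcat ws))" using wchain_Cons_hd[OF Cons.prems(3) False] IH(2) w by simp
    have "homw Obj hom (butlast os @ fst (wconcat ws)) (ds @ fst (snd (wconcat ws))) (as @ snd (snd (wconcat ws)))"
      by (rule homw_append[OF dw(2) IH(1) j])
    moreover have "hd (butlast os @ fst (wconcat ws)) = hd os" using los
      by (cases os) auto
    moreover have "last (butlast os @ fst (wconcat ws)) = last (fst (last ws))"
    proof -
      have "fst (wconcat ws) \<noteq> []" using IH(1) unfolding homw_def by auto
      then show ?thesis using IH(3) by simp
    qed
    ultimately show ?thesis using wconcat_Cons[OF False, of w] w False by simp
  qed
qed

lemma pi1_eq: "pi1 sc as = (if length as = 1 then sc 1 (hd as) else 0)"
  unfolding pi1_def pr1_def by simp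

lemma len1_conv: "length xs = Suc 0 \<Longrightarrow> xs = [hd xs]"
  by (cases xs) auto

lemma len2_conv: "length xs = Suc (Suc 0) \<Longrightarrow> xs = [hd xs, last xs]"
  by (cases xs; cases "tl xs") auto

lemma pi1_hom:
  assumes A: "ainf_cat sc Obj hom b" and d: "dword Obj hom FOb (os, ds, as)"
  shows "pi1 sc as \<in> hom (hd os) (last os) (sum_list ds)"
proof (cases "length as = 1")
  case True
  have m: "module sc" using A by (rule ainf_module)
  have h: "homw Obj hom os ds as" using d unfolding dword_def by auto
  then have lo: "length os = Suc (Suc 0)" "length ds = Suc 0" and e: "as ! 0 \<in> hom (os ! 0) (os ! 1) (ds ! 0)"
    using True unfolding homw_def by auto
  have "os = [hd os, last os]" using len2_conv[OF lo(1)] .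
  moreover have "ds = [hd ds]" using len1_conv[OF lo(2)] .
  moreover have "as = [hd as]" using len1_conv True by simp
  ultimately have "hd as \<in> hom (hd os) (last os) (sum_list ds)" using e
    by (metis One_nat_def nth_Cons_0 nth_Cons_Suc sum_list.Cons sum_list.Nil add.right_neutral)
  then show ?thesis using True m by (simp add: pi1_eq module.scale_one)
next
  case False
  then show ?thesis using ainf_zero[OF A] by (simp add: pi1_eq)
qed

lemma concat_single: "(\<forall>x\<in>set xs. f x = [g x]) \<Longrightarrow> concat (map f xs) = map g xs"
  by (induction xs) auto

lemma len_le_concat: "xs \<in> set xss \<Longrightarrow> length xs \<le> length (concat xss)"
  by (induction xss) auto

theorem lemma7p3:
  fixes sc :: "'k::comm_ring_1 \<Rightarrow> 'm::ab_group_add \<Rightarrow> 'm"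
    and Obj FOb :: "'o set"
    and hom :: "'o \<Rightarrow> 'o \<Rightarrow> int \<Rightarrow> 'm set"
    and b :: "'o list \<Rightarrow> 'm list \<Rightarrow> 'm"
  assumes "ainf_cat sc Obj hom b"
    and "FOb \<subseteq> Obj"
    and "vanishes_on_D Obj hom FOb b"
  shows "(\<forall>X\<in>Obj. \<forall>Y\<in>Obj. \<forall>d a. a \<in> hom X Y d \<longrightarrow> pi1 sc (j1 a) = a)
    \<and> (\<forall>os ds as. dword Obj hom FOb (os, ds, as) \<longrightarrow>
          pi1 sc as \<in> hom (hd os) (last os) (sum_list ds))
    \<and> (\<forall>ws. 1 \<le> length ws \<and> (\<forall>w\<in>set ws. dword Obj hom FOb w) \<and> wchain ws \<longrightarrow>
          b (map (hd \<circ> fst) ws @ [last (fst (last ws))]) (map (\<lambda>w. pi1 sc (snd (snd w))) ws)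
          = pr1 sc (bbar b ws :: ('k, 'm) tsum))"
proof (intro conjI)
  note A = assms(1)
  have m: "module sc" using A by (rule ainf_module)
  show "\<forall>X\<in>Obj. \<forall>Y\<in>Obj. \<forall>d a. a \<in> hom X Y d \<longrightarrow> pi1 sc (j1 a) = a"
    using m by (simp add: pi1_eq j1_def module.scale_one)
  show P2: "\<forall>os ds as. dword Obj hom FOb (os, ds, as) \<longrightarrow> pi1 sc as \<in> hom (hd os) (last os) (sum_list ds)"
    using pi1_hom[OF A] by blast
  show "\<forall>ws. 1 \<le> length ws \<and> (\<forall>w\<in>set ws. dword Obj hom FOb w) \<and> wchain ws \<longrightarrow>
          b (map (hd \<circ> fst) ws @ [last (fst (last ws))]) (map (\<lambda>w. pi1 sc (snd (snd w))) ws)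
          = pr1 sc (bbar b ws :: ('k, 'm) tsum)"
  proof (intro allI impI)
    fix ws :: "('o list \<times> int list \<times> 'm list) list"
    assume H: "1 \<le> length ws \<and> (\<forall>w\<in>set ws. dword Obj hom FOb w) \<and> wchain ws"
    have ne: "ws \<noteq> []" using H by auto
    have dw: "\<And>w. w \<in> set ws \<Longrightarrow> dword Obj hom FOb w" using H by blast
    have ch: "wchain ws" using H by blast
    obtain os ds as where wc: "wconcat ws = (os, ds, as)" by (cases "wconcat ws") auto
    have WH: "homw Obj hom os ds as" "last os = last (fst (last ws))"
      using wconcat_homw[OF ne _ ch, of Obj hom FOb] dw wc by auto
    have asc: "as = concat (map (snd \<circ> snd) ws)" and osc: "os = concat (map (butlast \<circ> fst) ws) @ [last (fst (last ws))]"
      using wc unfolding wconcat_def by auto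
    have dwl: "\<And>w. w \<in> set ws \<Longrightarrow> 1 \<le> length (snd (snd w))"
      using dw unfolding dword_def by (auto split: prod.splits)
    have lenw: "\<And>w. w \<in> set ws \<Longrightarrow> length (snd (snd w)) \<le> length as"
      unfolding asc by (rule len_le_concat) auto
    have n1: "1 \<le> length as" using dwl[of "hd ws"] lenw[of "hd ws"] ne by auto
    have RHS: "pr1 sc (bbar b ws :: ('k, 'm) tsum) = b os as"
      by (rule pr1_bbar[OF wc _ _ n1 _ _ m]) (use WH(1) dwl ne in \<open>auto simp: homw_def\<close>)
    define os' where "os' = map (hd \<circ> fst) ws @ [last (fst (last ws))]"
    define ds' where "ds' = map (\<lambda>w. sum_list (fst (snd w))) ws"
    define as' where "as' = map (\<lambda>w. pi1 sc (snd (snd w))) ws"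
    have hw: "\<And>w. w \<in> set ws \<Longrightarrow> homw Obj hom (fst w) (fst (snd w)) (snd (snd w))"
      using dw unfolding dword_def by (auto split: prod.splits)
    have fne: "\<And>w. w \<in> set ws \<Longrightarrow> fst w \<noteq> [] \<and> set (fst w) \<subseteq> Obj"
      using hw unfolding homw_def by fastforce
    have H': "homw Obj hom os' ds' as'"
      unfolding homw_def
    proof (intro conjI allI impI)
      show "set os' \<subseteq> Obj"
      proof -
        have "last ws \<in> set ws" using ne by simp
        then have "last (fst (last ws)) \<in> Obj" using fne by fastforce
        moreover have "hd (fst w) \<in> Obj" if "w \<in> set ws" for w using fne[OF that] by (meson hd_in_set subsetD)
        ultimately show ?thesis unfolding os'_def by auto
      qed
      fix i assume i: "i < length as'"
      then have i': "i < length ws" unfolding as'_def by simp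
      have wi: "ws ! i \<in> set ws" using i' by simp
      have e: "as' ! i \<in> hom (hd (fst (ws ! i))) (last (fst (ws ! i))) (ds' ! i)"
        using P2 dw[OF wi] i' unfolding as'_def ds'_def by (cases "ws ! i") auto
      have o1: "os' ! i = hd (fst (ws ! i))" using i' unfolding os'_def by (simp add: nth_append)
      have o2: "os' ! (i+1) = last (fst (ws ! i))"
      proof (cases "i + 1 < length ws")
        case True
        then show ?thesis using ch unfolding os'_def wchain_def by (simp add: nth_append)
      next
        case False
        then have "i = length ws - 1" using i' by simp
        then show ?thesis using ne unfolding os'_def by (simp add: nth_append last_conv_nth)
      qed
      show "as' ! i \<in> hom (os' ! i) (os' ! (i + 1)) (ds' ! i)" using e o1 o2 by simp
    qed (simp_all add: os'_def ds'_def as'_def)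
    show "b (map (hd \<circ> fst) ws @ [last (fst (last ws))]) (map (\<lambda>w. pi1 sc (snd (snd w))) ws)
          = pr1 sc (bbar b ws :: ('k, 'm) tsum)"
    proof (cases "\<forall>w\<in>set ws. length (snd (snd w)) = 1")
      case True
      have "os' = os"
      proof -
        have "\<forall>w\<in>set ws. (butlast \<circ> fst) w = [(hd \<circ> fst) w]"
        proof
          fix w assume w: "w \<in> set ws"
          have "length (fst w) = Suc (Suc 0)" using hw[OF w] True w unfolding homw_def by auto
          then show "(butlast \<circ> fst) w = [(hd \<circ> fst) w]" using len2_conv by (metis butlast.simps(2) butlast_snoc comp_apply list.distinct(1) append_Cons append_Nil)
        qed
        then show ?thesis unfolding os'_def osc using concat_single by metis
      qed
      moreover have "as' = as"
      proof -
        have "\<forall>w\<in>set ws. (snd \<circ> snd) w = [pi1 sc (snd (snd w))]"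
        proof
          fix w assume w: "w \<in> set ws"
          have "length (snd (snd w)) = Suc 0" using True w by auto
          then show "(snd \<circ> snd) w = [pi1 sc (snd (snd w))]" using len1_conv m
            by (simp add: pi1_eq module.scale_one)
        qed
        then show ?thesis unfolding as'_def asc using concat_single[of ws "snd \<circ> snd" "\<lambda>w. pi1 sc (snd (snd w))"] by simp
      qed
      ultimately show ?thesis using RHS unfolding os'_def as'_def by simp
    next
      case False
      then obtain w where w: "w \<in> set ws" "length (snd (snd w)) \<noteq> 1" by blast
      then have w2: "2 \<le> length (snd (snd w))" using dwl[OF w(1)] by simp
      obtain j where j: "j < length ws" "ws ! j = w" using w(1) by (metis in_set_conv_nth)
      have "as' ! j = 0" using j w(2) unfolding as'_def by (simp add: pi1_eq)
      then have L0: "b os' as' = 0" using b_zero[OF A H'] j unfolding as'_def by simp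
      have lf: "length (fst w) = length (snd (snd w)) + 1" using hw[OF w(1)] unfolding homw_def by simp
      have F1: "fst w ! 1 \<in> FOb" using dw[OF w(1)] w2 unfolding dword_def by (auto split: prod.splits)
      have "fst w ! 1 \<in> set (butlast (fst w))" using lf w2 by (simp add: nth_butlast[symmetric])
      then have "fst w ! 1 \<in> set os" unfolding osc using w(1) by auto
      moreover have "2 \<le> length as" using lenw[OF w(1)] w2 by simp
      ultimately have "b os as = 0" using assms(3) WH(1) F1 unfolding vanishes_on_D_def by blast
      then show ?thesis using L0 RHS unfolding os'_def as'_def by simp
    qed
  qed
qed

end
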